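(* For every $n\geq 3$, no quantum behavior for the $n$-cycle scenario is strongly contextual.
   Context: The $n$-cycle scenario has measurements $M_1,\dots,M_n$ with outcomes in $\{0,1\}$ and contexts $\{M_i,M_{i+1}\}$, indices mod $n$. A behavior is a family of probability distributions $p_i$ on $\{0,1\}^2$, $p_i(x,y)$ being the probability that $M_i=x$, $M_{i+1}=y$. It is quantum if there exist a complex separable Hilbert space $\mathcal{H}$, a density operator $\rho$ on $\mathcal{H}$, and for each $i$ orthogonal projectors $P_{i;0},P_{i;1}$ with $P_{i;0}+P_{i;1}=\mathbb{I}$, such that $P_{i;o}$ and $P_{i+1;o'}$ commute for all $i,o,o'$ and $p_i(x,y)=\mathrm{Tr}(P_{i;x}P_{i+1;y}\rho)$. The behavior is strongly contextual if there is no $t\in\{0,1\}^n$ with $p_i(t_i,t_{i+1})>0$ for all $i$. *)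

theory Defs
  imports "HOL-Analysis.Analysis"
begin

text \<open>
  Separable complex Hilbert spaces are modelled concretely, up to unitary
  equivalence, as l2(J) for a countable index set J (here J :: nat set):
  vectors are functions nat => complex vanishing outside J with
  square-summable modulus.  Operators are functions on such vectors; all
  conditions are imposed on vectors of l2(J) only.
\<close>

type_synonym vec = "nat \<Rightarrow> complex"
type_synonym op = "vec \<Rightarrow> vec"

definition l2 :: "nat set \<Rightarrow> vec set" where
  "l2 J = {x. (\<forall>k. k \<notin> J \<longrightarrow> x k = 0) \<and> summable (\<lambda>k. (cmod (x k))^2)}"

definition l2_inner :: "vec \<Rightarrow> vec \<Rightarrow> complex" where
  "l2_inner x y = (\<Sum>k. cnj (x k) * y k)"

definition l2_norm :: "vec \<Rightarrow> real" where
  "l2_norm x = sqrt (\<Sum>k. (cmod (x k))^2)"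

definition basis_vec :: "nat \<Rightarrow> vec" where
  "basis_vec k = (\<lambda>j. if j = k then 1 else 0)"

definition bounded_linear_op :: "nat set \<Rightarrow> op \<Rightarrow> bool" where
  "bounded_linear_op J A \<longleftrightarrow>
     (\<forall>x\<in>l2 J. A x \<in> l2 J) \<and>
     (\<forall>x\<in>l2 J. \<forall>y\<in>l2 J. \<forall>a::complex. A (\<lambda>k. a * x k + y k) = (\<lambda>k. a * A x k + A y k)) \<and>
     (\<exists>C. \<forall>x\<in>l2 J. l2_norm (A x) \<le> C * l2_norm x)"

definition projector :: "nat set \<Rightarrow> op \<Rightarrow> bool" where
  "projector J P \<longleftrightarrow> bounded_linear_op J P \<and>
     (\<forall>x\<in>l2 J. P (P x) = P x) \<and>
     (\<forall>x\<in>l2 J. \<forall>y\<in>l2 J. l2_inner (P x) y = l2_inner x (P y))"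

definition trace_op :: "nat set \<Rightarrow> op \<Rightarrow> complex" where
  "trace_op J T = (\<Sum>\<^sub>\<infinity>k\<in>J. T (basis_vec k) k)"

text \<open>Density operator: bounded linear, positive semidefinite, trace class
  with trace one (for a positive operator the trace is the basis-independent
  sum of the diagonal entries).\<close>
definition density_op :: "nat set \<Rightarrow> op \<Rightarrow> bool" where
  "density_op J \<rho> \<longleftrightarrow> bounded_linear_op J \<rho> \<and>
     (\<forall>x\<in>l2 J. l2_inner x (\<rho> x) \<in> \<real> \<and> Re (l2_inner x (\<rho> x)) \<ge> 0) \<and>
     ((\<lambda>k. Re (\<rho> (basis_vec k) k)) has_sum 1) J"

text \<open>Behaviour of the n-cycle scenario: p i x y is the probability that
  M_i = x and M_(i+1 mod n) = y, for i < n and x, y in {0,1}.\<close>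
type_synonym behavior = "nat \<Rightarrow> nat \<Rightarrow> nat \<Rightarrow> real"

definition quantum_behavior :: "nat \<Rightarrow> behavior \<Rightarrow> bool" where
  "quantum_behavior n p \<longleftrightarrow>
    (\<exists>(J::nat set) (\<rho>::op) (P::nat \<Rightarrow> nat \<Rightarrow> op).
       density_op J \<rho> \<and>
       (\<forall>i<n. \<forall>a\<in>{0,1}. projector J (P i a)) \<and>
       (\<forall>i<n. \<forall>x\<in>l2 J. (\<lambda>k. P i 0 x k + P i 1 x k) = x) \<and>
       (\<forall>i<n. \<forall>a\<in>{0,1}. \<forall>b\<in>{0,1}. \<forall>x\<in>l2 J.
           P i a (P ((i + 1) mod n) b x) = P ((i + 1) mod n) b (P i a x)) \<and>
       (\<forall>i<n. \<forall>x\<in>{0,1}. \<forall>y\<in>{0,1}.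
           complex_of_real (p i x y) =
             trace_op J (\<lambda>v. P i x (P ((i + 1) mod n) y (\<rho> v)))))"

definition strongly_contextual :: "nat \<Rightarrow> behavior \<Rightarrow> bool" where
  "strongly_contextual n p \<longleftrightarrow>
    \<not> (\<exists>t::nat \<Rightarrow> nat. (\<forall>i<n. t i \<in> {0,1}) \<and>
          (\<forall>i<n. p i (t i) (t ((i + 1) mod n)) > 0))"

end

theory Submission
  imports Defs
begin

lemma l2_vanish: "x \<in> l2 J \<Longrightarrow> k \<notin> J \<Longrightarrow> x k = 0"
  by (simp add: l2_def)

lemma l2_summable: "x \<in> l2 J \<Longrightarrow> summable (\<lambda>k. (cmod (x k))^2)"
  by (simp add: l2_def)

lemma sq_sum_le: "(cmod (u + v))^2 \<le> 2 * (cmod u)^2 + 2 * (cmod v)^2"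
proof -
  have "cmod (u+v) \<le> cmod u + cmod v" by (rule norm_triangle_ineq)
  hence "(cmod (u+v))^2 \<le> (cmod u + cmod v)^2"
    by (simp add: power_mono)
  also have "\<dots> \<le> 2 * (cmod u)^2 + 2 * (cmod v)^2"
  proof -
    have "0 \<le> (cmod u - cmod v)^2" by simp
    thus ?thesis by (simp add: power2_eq_square algebra_simps)
  qed
  finally show ?thesis .
qed

lemma l2_lin: assumes "x \<in> l2 J" "y \<in> l2 J" shows "(\<lambda>k. a * x k + y k) \<in> l2 J"
proof -
  have "summable (\<lambda>k. 2 * (cmod a)^2 * (cmod (x k))^2 + 2 * (cmod (y k))^2)"
    using l2_summable[OF assms(1)] l2_summable[OF assms(2)]
    by (intro summable_add summable_mult) auto
  moreover have "norm ((cmod (a * x k + y k))^2) \<le> 2 * (cmod a)^2 * (cmod (x k))^2 + 2 * (cmod (y k))^2" for k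
    using sq_sum_le[of "a * x k" "y k"] by (simp add: norm_mult power_mult_distrib)
  ultimately have "summable (\<lambda>k. (cmod (a * x k + y k))^2)"
    by (rule summable_comparison_test'[where N=0])
  thus ?thesis using assms by (auto simp: l2_def)
qed

lemma l2_zero: "(\<lambda>k. 0) \<in> l2 J"
  by (simp add: l2_def)

lemma l2_scale: assumes "x \<in> l2 J" shows "(\<lambda>k. a * x k) \<in> l2 J"
  using l2_lin[OF assms l2_zero, of a] by simp

lemma l2_add: assumes "x \<in> l2 J" "y \<in> l2 J" shows "(\<lambda>k. x k + y k) \<in> l2 J"
  using l2_lin[OF assms, of 1] by simp

lemma l2_diff: assumes "x \<in> l2 J" "y \<in> l2 J" shows "(\<lambda>k. x k - y k) \<in> l2 J"
  using l2_lin[OF assms(2,1), of "-1"] by simp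

lemma l2_sum: assumes "\<And>j. j \<in> F \<Longrightarrow> v j \<in> l2 J" shows "(\<lambda>k. \<Sum>j\<in>F. c j * v j k) \<in> l2 J"
  using assms
proof (induction F rule: infinite_finite_induct)
  case (infinite A) thus ?case by (simp add: l2_zero)
next
  case empty thus ?case by (simp add: l2_zero)
next
  case (insert x F)
  have "(\<lambda>k. c x * v x k + (\<Sum>j\<in>F. c j * v j k)) \<in> l2 J"
    using insert by (intro l2_lin) auto
  thus ?case using insert by simp
qed

lemma basis_l2: "m \<in> J \<Longrightarrow> basis_vec m \<in> l2 J"
proof -
  have "summable (\<lambda>k. (cmod (if k = m then 1 else 0 :: complex))^2)"
    by (rule summable_finite[of "{m}"]) auto
  thus "m \<in> J \<Longrightarrow> basis_vec m \<in> l2 J" unfolding l2_def basis_vec_def by auto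
qed

lemma prod_abs_summable: assumes "x \<in> l2 J" "y \<in> l2 J"
  shows "summable (\<lambda>k. cmod (cnj (x k) * y k))"
proof -
  have "summable (\<lambda>k. (cmod (x k))^2 / 2 + (cmod (y k))^2 / 2)"
    using l2_summable[OF assms(1)] l2_summable[OF assms(2)]
    by (intro summable_add summable_divide) auto
  moreover have "norm (cmod (cnj (x k) * y k)) \<le> (cmod (x k))^2 / 2 + (cmod (y k))^2 / 2" for k
  proof -
    have "0 \<le> (cmod (x k) - cmod (y k))^2" by simp
    thus ?thesis by (simp add: norm_mult power2_eq_square algebra_simps)
  qed
  ultimately show ?thesis
    by (rule summable_comparison_test'[where N=0])
qed

lemma prod_summable: assumes "x \<in> l2 J" "y \<in> l2 J"
  shows "summable (\<lambda>k. cnj (x k) * y k)"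
  by (rule summable_norm_cancel) (use prod_abs_summable[OF assms] in simp)

lemma inner_lin2: assumes "u \<in> l2 J" "x \<in> l2 J" "y \<in> l2 J"
  shows "l2_inner u (\<lambda>k. a * x k + y k) = a * l2_inner u x + l2_inner u y"
proof -
  have s1: "summable (\<lambda>k. cnj (u k) * x k)" "summable (\<lambda>k. cnj (u k) * y k)"
    using prod_summable[OF assms(1,2)] prod_summable[OF assms(1,3)] by auto
  have "l2_inner u (\<lambda>k. a * x k + y k) = (\<Sum>k. a * (cnj (u k) * x k) + cnj (u k) * y k)"
    unfolding l2_inner_def by (simp add: algebra_simps)
  also have "\<dots> = (\<Sum>k. a * (cnj (u k) * x k)) + (\<Sum>k. cnj (u k) * y k)"
    by (rule suminf_add[symmetric]) (use s1 in \<open>auto intro: summable_mult\<close>)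
  also have "\<dots> = a * l2_inner u x + l2_inner u y"
    unfolding l2_inner_def using s1 by (simp add: suminf_mult)
  finally show ?thesis .
qed

lemma inner_conj: assumes "x \<in> l2 J" "y \<in> l2 J" shows "l2_inner x y = cnj (l2_inner y x)"
proof -
  have "(\<lambda>k. cnj (y k) * x k) sums (\<Sum>k. cnj (y k) * x k)"
    using prod_summable[OF assms(2,1)] by (rule summable_sums)
  hence "(\<lambda>k. cnj (cnj (y k) * x k)) sums cnj (\<Sum>k. cnj (y k) * x k)"
    by (rule sums_cnj[THEN iffD2])
  thus ?thesis unfolding l2_inner_def by (simp add: sums_iff mult.commute)
qed

lemma inner_lin1: assumes "u \<in> l2 J" "x \<in> l2 J" "y \<in> l2 J"
  shows "l2_inner (\<lambda>k. a * x k + y k) u = cnj a * l2_inner x u + l2_inner y u"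
proof -
  have "(\<lambda>k. a * x k + y k) \<in> l2 J" using assms by (intro l2_lin)
  hence "l2_inner (\<lambda>k. a * x k + y k) u = cnj (l2_inner u (\<lambda>k. a * x k + y k))"
    using assms(1) by (rule inner_conj)
  also have "\<dots> = cnj (a * l2_inner u x + l2_inner u y)" by (simp only: inner_lin2[OF assms])
  also have "\<dots> = cnj a * cnj (l2_inner u x) + cnj (l2_inner u y)" by simp
  also have "\<dots> = cnj a * l2_inner x u + l2_inner y u"
    using inner_conj[OF assms(2,1)] inner_conj[OF assms(3,1)] by simp
  finally show ?thesis .
qed

lemma inner_basis1: "l2_inner (basis_vec m) u = u m"
proof -
  have "(\<lambda>k. cnj (basis_vec m k) * u k) = (\<lambda>k. if k = m then u m else 0)"
    by (auto simp: basis_vec_def)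
  moreover have "(\<lambda>k. if k = m then u m else 0) sums u m"
    using sums_single[of m "\<lambda>_. u m"] by simp
  ultimately show ?thesis unfolding l2_inner_def by (simp add: sums_iff)
qed

lemma inner_basis2: "u \<in> l2 J \<Longrightarrow> m \<in> J \<Longrightarrow> l2_inner u (basis_vec m) = cnj (u m)"
  by (metis inner_basis1 inner_conj basis_l2)

lemma inner_self: assumes "x \<in> l2 J" shows "l2_inner x x = complex_of_real (\<Sum>k. (cmod (x k))^2)"
proof -
  have "(\<lambda>k. cnj (x k) * x k) = (\<lambda>k. complex_of_real ((cmod (x k))^2))"
  proof
    fix k show "cnj (x k) * x k = complex_of_real ((cmod (x k))^2)"
      using complex_norm_square[of "x k"] by (simp only: mult.commute)
  qed
  thus ?thesis unfolding l2_inner_def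
    by (simp only: suminf_of_real[OF l2_summable[OF assms]])
qed

lemma inner_zero2: "l2_inner u (\<lambda>k. 0) = 0"
  by (simp add: l2_inner_def)

lemma inner_scale2: assumes "u \<in> l2 J" "x \<in> l2 J"
  shows "l2_inner u (\<lambda>k. a * x k) = a * l2_inner u x"
  using inner_lin2[OF assms l2_zero, of a] by (simp add: inner_zero2)

lemma inner_sum2: assumes "u \<in> l2 J" "\<And>j. j \<in> F \<Longrightarrow> v j \<in> l2 J"
  shows "l2_inner u (\<lambda>k. \<Sum>j\<in>F. c j * v j k) = (\<Sum>j\<in>F. c j * l2_inner u (v j))"
  using assms(2)
proof (induction F rule: infinite_finite_induct)
  case (infinite A) thus ?case by (simp add: inner_zero2)
next
  case empty thus ?case by (simp add: inner_zero2)
next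
  case (insert x F)
  have s: "(\<lambda>k. \<Sum>j\<in>F. c j * v j k) \<in> l2 J" using insert by (intro l2_sum) auto
  have "l2_inner u (\<lambda>k. \<Sum>j\<in>insert x F. c j * v j k)
      = l2_inner u (\<lambda>k. c x * v x k + (\<Sum>j\<in>F. c j * v j k))" using insert by simp
  also have "\<dots> = c x * l2_inner u (v x) + l2_inner u (\<lambda>k. \<Sum>j\<in>F. c j * v j k)"
    using insert s assms(1) by (intro inner_lin2) auto
  finally show ?case using insert by simp
qed

definition lin_op :: "nat set \<Rightarrow> op \<Rightarrow> bool" where
  "lin_op J A \<longleftrightarrow> (\<forall>x\<in>l2 J. A x \<in> l2 J) \<and>
     (\<forall>x\<in>l2 J. \<forall>y\<in>l2 J. \<forall>a::complex. A (\<lambda>k. a * x k + y k) = (\<lambda>k. a * A x k + A y k))"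

lemma blo_lin: "bounded_linear_op J A \<Longrightarrow> lin_op J A"
  by (simp add: bounded_linear_op_def lin_op_def)

lemma lin_opD: "lin_op J A \<Longrightarrow> x \<in> l2 J \<Longrightarrow> A x \<in> l2 J"
  "lin_op J A \<Longrightarrow> x \<in> l2 J \<Longrightarrow> y \<in> l2 J \<Longrightarrow> A (\<lambda>k. a * x k + y k) = (\<lambda>k. a * A x k + A y k)"
  by (auto simp: lin_op_def)

lemma op_zero: assumes "lin_op J A" shows "A (\<lambda>k. 0) = (\<lambda>k. 0)"
proof -
  have "A (\<lambda>k. 1 * 0 + 0) = (\<lambda>k. 1 * A (\<lambda>k. 0) k + A (\<lambda>k. 0) k)"
    using lin_opD(2)[OF assms l2_zero l2_zero] .
  hence "A (\<lambda>k. 0) = (\<lambda>k. A (\<lambda>k. 0) k + A (\<lambda>k. 0) k)" by simp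
  hence "\<And>k. A (\<lambda>k. 0) k = A (\<lambda>k. 0) k + A (\<lambda>k. 0) k" by metis
  thus ?thesis by auto
qed

lemma op_sum: assumes "lin_op J A" "\<And>j. j \<in> F \<Longrightarrow> v j \<in> l2 J"
  shows "A (\<lambda>k. \<Sum>j\<in>F. c j * v j k) = (\<lambda>k. \<Sum>j\<in>F. c j * A (v j) k)"
  using assms(2)
proof (induction F rule: infinite_finite_induct)
  case (infinite A) thus ?case using op_zero[OF assms(1)] by simp
next
  case empty thus ?case using op_zero[OF assms(1)] by simp
next
  case (insert x F)
  have s: "(\<lambda>k. \<Sum>j\<in>F. c j * v j k) \<in> l2 J" using insert by (intro l2_sum) auto
  have "A (\<lambda>k. \<Sum>j\<in>insert x F. c j * v j k) = A (\<lambda>k. c x * v x k + (\<Sum>j\<in>F. c j * v j k))"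
    using insert by simp
  also have "\<dots> = (\<lambda>k. c x * A (v x) k + A (\<lambda>k. \<Sum>j\<in>F. c j * v j k) k)"
    using insert s by (intro lin_opD(2)[OF assms(1)]) auto
  finally show ?case using insert by simp
qed

definition sa_idem :: "nat set \<Rightarrow> op \<Rightarrow> bool" where
  "sa_idem J Q \<longleftrightarrow> lin_op J Q \<and> (\<forall>x\<in>l2 J. Q (Q x) = Q x) \<and>
     (\<forall>x\<in>l2 J. \<forall>y\<in>l2 J. l2_inner (Q x) y = l2_inner x (Q y))"

lemma proj_sa: "projector J P \<Longrightarrow> sa_idem J P"
  by (simp add: projector_def sa_idem_def blo_lin)

lemma sa_comp: assumes A: "sa_idem J A" and B: "sa_idem J B"
  and c: "\<And>x. x \<in> l2 J \<Longrightarrow> A (B x) = B (A x)"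
  shows "sa_idem J (\<lambda>x. A (B x))"
proof -
  have lA: "lin_op J A" and lB: "lin_op J B" using A B by (auto simp: sa_idem_def)
  have l: "lin_op J (\<lambda>x. A (B x))"
    unfolding lin_op_def using lin_opD[OF lA] lin_opD[OF lB] by auto
  have i: "A (B (A (B x))) = A (B x)" if x: "x \<in> l2 J" for x
  proof -
    have bx: "B x \<in> l2 J" using lin_opD(1)[OF lB x] .
    have "A (B (A (B x))) = A (A (B (B x)))" using c[OF bx] by simp
    also have "\<dots> = A (B (B x))" using A lin_opD(1)[OF lB bx] by (simp add: sa_idem_def)
    also have "\<dots> = A (B x)" using B x by (simp add: sa_idem_def)
    finally show ?thesis .
  qed
  have s: "l2_inner (A (B x)) y = l2_inner x (A (B y))" if "x \<in> l2 J" "y \<in> l2 J" for x y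
  proof -
    have "l2_inner (A (B x)) y = l2_inner (B x) (A y)"
      using A that lin_opD(1)[OF lB] by (simp add: sa_idem_def)
    also have "\<dots> = l2_inner x (B (A y))"
      using B that lin_opD(1)[OF lA] by (simp add: sa_idem_def)
    also have "\<dots> = l2_inner x (A (B y))" using c that by simp
    finally show ?thesis .
  qed
  show ?thesis using l i s by (simp add: sa_idem_def)
qed

lemma rho_lin: "density_op J \<rho> \<Longrightarrow> lin_op J \<rho>"
  by (simp add: density_op_def blo_lin)

lemma rho_real: assumes "density_op J \<rho>" "x \<in> l2 J"
  shows "Im (l2_inner x (\<rho> x)) = 0" "Re (l2_inner x (\<rho> x)) \<ge> 0"
  using assms by (auto simp: density_op_def complex_is_Real_iff)

lemma rho_herm: assumes d: "density_op J \<rho>" and u: "u \<in> l2 J" and v: "v \<in> l2 J"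
  shows "l2_inner u (\<rho> v) = cnj (l2_inner v (\<rho> u))"
proof -
  have L: "lin_op J \<rho>" using d by (rule rho_lin)
  have ru: "\<rho> u \<in> l2 J" and rv: "\<rho> v \<in> l2 J" using lin_opD(1)[OF L] u v by auto
  have gen: "l2_inner (\<lambda>k. t * v k + u k) (\<rho> (\<lambda>k. t * v k + u k))
     = cnj t * (t * l2_inner v (\<rho> v) + l2_inner v (\<rho> u)) + (t * l2_inner u (\<rho> v) + l2_inner u (\<rho> u))" for t
  proof -
    have w: "(\<lambda>k. t * v k + u k) \<in> l2 J" using v u by (rule l2_lin)
    have rw: "\<rho> (\<lambda>k. t * v k + u k) = (\<lambda>k. t * \<rho> v k + \<rho> u k)" using lin_opD(2)[OF L v u] .
    have rwl: "(\<lambda>k. t * \<rho> v k + \<rho> u k) \<in> l2 J" using rv ru by (rule l2_lin)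
    have "l2_inner (\<lambda>k. t * v k + u k) (\<rho> (\<lambda>k. t * v k + u k))
       = cnj t * l2_inner v (\<lambda>k. t * \<rho> v k + \<rho> u k) + l2_inner u (\<lambda>k. t * \<rho> v k + \<rho> u k)"
      unfolding rw using inner_lin1[OF rwl v u] .
    also have "\<dots> = cnj t * (t * l2_inner v (\<rho> v) + l2_inner v (\<rho> u)) + (t * l2_inner u (\<rho> v) + l2_inner u (\<rho> u))"
      using inner_lin2[OF v rv ru] inner_lin2[OF u rv ru] by simp
    finally show ?thesis .
  qed
  define a where "a = l2_inner u (\<rho> v)"
  define b where "b = l2_inner v (\<rho> u)"
  have w1: "(\<lambda>k. 1 * v k + u k) \<in> l2 J" "(\<lambda>k. \<i> * v k + u k) \<in> l2 J" by (rule l2_lin[OF v u])+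
  have i1: "Im (l2_inner (\<lambda>k. 1 * v k + u k) (\<rho> (\<lambda>k. 1 * v k + u k))) = 0"
    using rho_real(1)[OF d w1(1)] .
  have i2: "Im (l2_inner (\<lambda>k. \<i> * v k + u k) (\<rho> (\<lambda>k. \<i> * v k + u k))) = 0"
    using rho_real(1)[OF d w1(2)] .
  have iu: "Im (l2_inner u (\<rho> u)) = 0" and iv: "Im (l2_inner v (\<rho> v)) = 0"
    using rho_real(1)[OF d] u v by auto
  have e1: "Im a + Im b = 0" using i1 iu iv unfolding gen a_def b_def by simp
  have e2: "Re a - Re b = 0" using i2 iu iv unfolding gen a_def b_def by (simp add: algebra_simps)
  have "a = cnj b" using e1 e2 by (simp add: complex_eq_iff)
  thus ?thesis unfolding a_def b_def .
qed

lemma CS_form: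
  fixes B :: "vec \<Rightarrow> vec \<Rightarrow> complex"
  assumes lin: "\<And>u x y a. u \<in> S \<Longrightarrow> x \<in> S \<Longrightarrow> y \<in> S \<Longrightarrow> B u (\<lambda>i. a * x i + y i) = a * B u x + B u y"
    and herm: "\<And>u v. u \<in> S \<Longrightarrow> v \<in> S \<Longrightarrow> B u v = cnj (B v u)"
    and pos: "\<And>u. u \<in> S \<Longrightarrow> Re (B u u) \<ge> 0"
    and closed: "\<And>x y a. x \<in> S \<Longrightarrow> y \<in> S \<Longrightarrow> (\<lambda>i. a * x i + y i) \<in> S"
    and u: "u \<in> S" and v: "v \<in> S"
  shows "(cmod (B u v))^2 \<le> Re (B u u) * Re (B v v)"
proof -
  have key: "Re (B (\<lambda>i. t * v i + u i) (\<lambda>i. t * v i + u i))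
     = (cmod t)^2 * Re (B v v) + 2 * Re (t * B u v) + Re (B u u)" for t
  proof -
    define w where "w = (\<lambda>i. t * v i + u i)"
    have w: "w \<in> S" unfolding w_def using v u by (rule closed)
    have "B w w = t * B w v + B w u" unfolding w_def[symmetric] using lin[OF w v u] by (simp add: w_def)
    moreover have "B w v = cnj t * B v v + B u v"
    proof -
      have "B w v = cnj (B v w)" using herm w v by blast
      also have "B v w = t * B v v + B v u" unfolding w_def using lin[OF v v u] .
      finally show ?thesis using herm[OF v v] herm[OF u v] by simp
    qed
    moreover have "B w u = cnj t * B v u + B u u"
    proof -
      have "B w u = cnj (B u w)" using herm w u by blast
      also have "B u w = t * B u v + B u u" unfolding w_def using lin[OF u v u] .
      finally show ?thesis using herm[OF u u] herm[OF v u] by simp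
    qed
    ultimately have "B w w = t * cnj t * B v v + t * B u v + cnj t * B v u + B u u"
      by (simp add: algebra_simps)
    moreover have "B v u = cnj (B u v)" using herm[OF v u] .
    moreover have "Im (B v v) = 0" using herm[OF v v] by (simp add: complex_eq_iff)
    ultimately have "Re (B w w) = Re (t * cnj t) * Re (B v v) + Re (t * B u v) + Re (cnj t * cnj (B u v)) + Re (B u u)"
      by simp
    moreover have "Re (t * cnj t) = (cmod t)^2" by (simp add: complex_norm_square[symmetric])
    moreover have "Re (cnj t * cnj (B u v)) = Re (t * B u v)"
      by (metis complex_cnj_cnj complex_cnj_mult cnj.sel(1))
    ultimately show ?thesis unfolding w_def by simp
  qed
  define c where "c = Re (B v v)"
  define z where "z = B u v"
  have c0: "c \<ge> 0" unfolding c_def using pos[OF v] .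
  show ?thesis
  proof (cases "c > 0")
    case True
    define t where "t = - cnj z / of_real c"
    have "0 \<le> Re (B (\<lambda>i. t * v i + u i) (\<lambda>i. t * v i + u i))" using pos closed[OF v u] by blast
    also have "\<dots> = (cmod t)^2 * c + 2 * Re (t * z) + Re (B u u)" unfolding key c_def z_def ..
    also have "(cmod t)^2 = (cmod z)^2 / c^2" using True unfolding t_def
      by (simp add: norm_divide power_divide)
    also have "Re (t * z) = - ((cmod z)^2) / c" unfolding t_def using True
      using cmod_power2[of z] by (simp add: power2_eq_square field_simps)
    finally have "0 \<le> (cmod z)^2 / c^2 * c - 2 * ((cmod z)^2 / c) + Re (B u u)" by simp
    also have "(cmod z)^2 / c^2 * c = (cmod z)^2 / c" using True by (simp add: power2_eq_square)
    finally have "(cmod z)^2 / c \<le> Re (B u u)" by simp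
    hence "(cmod z)^2 \<le> Re (B u u) * c" using True by (simp add: divide_le_eq)
    thus ?thesis unfolding z_def c_def .
  next
    case False
    hence c00: "c = 0" using c0 by simp
    have "z = 0"
    proof (rule ccontr)
      assume nz: "z \<noteq> 0"
      define s where "s = (Re (B u u) + 1) / (2 * (cmod z)^2)"
      define t where "t = - of_real s * cnj z"
      have "0 \<le> Re (B (\<lambda>i. t * v i + u i) (\<lambda>i. t * v i + u i))" using pos closed[OF v u] by blast
      also have "\<dots> = 2 * Re (t * z) + Re (B u u)" unfolding key c_def[symmetric] z_def[symmetric] c00 by simp
      also have "Re (t * z) = - (s * (cmod z)^2)" unfolding t_def
        using cmod_power2[of z] by (simp add: power2_eq_square algebra_simps)
      also have "s * (cmod z)^2 = (Re (B u u) + 1) / 2" unfolding s_def using nz by simp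
      finally show False by simp
    qed
    thus ?thesis unfolding z_def c_def using c00 pos[OF u] c_def by simp
  qed
qed

locale dens =
  fixes J :: "nat set" and \<rho> :: op
  assumes dens: "density_op J \<rho>"
begin

function ell :: "nat \<Rightarrow> vec" where
  "ell k = (let w = (\<lambda>m. \<rho> (basis_vec k) m - (\<Sum>j<k. cnj (ell j k) * ell j m)) in
     if k \<in> J \<and> Re (w k) > 0 then (\<lambda>m. w m / complex_of_real (sqrt (Re (w k)))) else (\<lambda>m. 0))"
  by auto
termination by (relation "Wellfounded.measure (\<lambda>k. k)") auto

declare ell.simps[simp del]

definition resid :: "nat \<Rightarrow> nat \<Rightarrow> vec" where
  "resid k m = (\<lambda>i. \<rho> (basis_vec m) i - (\<Sum>j<k. cnj (ell j m) * ell j i))"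

lemma ell_eq: "ell k = (if k \<in> J \<and> Re (resid k k k) > 0
   then (\<lambda>i. resid k k i / complex_of_real (sqrt (Re (resid k k k)))) else (\<lambda>i. 0))"
  by (subst ell.simps) (simp add: resid_def Let_def)

lemma L: "lin_op J \<rho>" using dens by (rule rho_lin)

lemma resid_l2_aux: assumes "\<And>j. j < k \<Longrightarrow> ell j \<in> l2 J" "m \<in> J" shows "resid k m \<in> l2 J"
proof -
  have a: "\<rho> (basis_vec m) \<in> l2 J" using lin_opD(1)[OF L basis_l2[OF assms(2)]] .
  have b: "(\<lambda>i. \<Sum>j\<in>{..<k}. cnj (ell j m) * ell j i) \<in> l2 J" using assms(1) by (intro l2_sum) auto
  show ?thesis unfolding resid_def using l2_diff[OF a b] .
qed

lemma ell_l2: "ell k \<in> l2 J"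
proof (induction k rule: less_induct)
  case (less k)
  show ?case
  proof (cases "k \<in> J \<and> Re (resid k k k) > 0")
    case True
    have r: "resid k k \<in> l2 J" using resid_l2_aux less True by blast
    have "(\<lambda>i. complex_of_real (1 / sqrt (Re (resid k k k))) * resid k k i) \<in> l2 J" using l2_scale[OF r] .
    moreover have "ell k = (\<lambda>i. complex_of_real (1 / sqrt (Re (resid k k k))) * resid k k i)"
      using True by (subst ell_eq) (simp add: divide_inverse mult.commute)
    ultimately show ?thesis by simp
  next
    case False
    have "ell k = (\<lambda>i. 0)" by (subst ell_eq) (use False in auto)
    thus ?thesis by (simp add: l2_zero)
  qed
qed

lemma resid_l2: "m \<in> J \<Longrightarrow> resid k m \<in> l2 J"
  using resid_l2_aux ell_l2 by blast

definition C :: "nat \<Rightarrow> vec \<Rightarrow> vec \<Rightarrow> complex" where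
  "C k u v = l2_inner u (\<rho> v) - (\<Sum>j<k. l2_inner u (ell j) * l2_inner (ell j) v)"

lemma C_basis: assumes u: "u \<in> l2 J" and m: "m \<in> J"
  shows "C k u (basis_vec m) = l2_inner u (resid k m)"
proof -
  have a: "\<rho> (basis_vec m) \<in> l2 J" using lin_opD(1)[OF L basis_l2[OF m]] .
  have b: "(\<lambda>i. \<Sum>j\<in>{..<k}. cnj (ell j m) * ell j i) \<in> l2 J" using ell_l2 by (intro l2_sum) auto
  have "resid k m = (\<lambda>i. (-1) * (\<Sum>j\<in>{..<k}. cnj (ell j m) * ell j i) + \<rho> (basis_vec m) i)"
    unfolding resid_def by auto
  hence "l2_inner u (resid k m) = - l2_inner u (\<lambda>i. \<Sum>j\<in>{..<k}. cnj (ell j m) * ell j i) + l2_inner u (\<rho> (basis_vec m))"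
    using inner_lin2[OF u b a, of "-1"] by simp
  also have "l2_inner u (\<lambda>i. \<Sum>j\<in>{..<k}. cnj (ell j m) * ell j i) = (\<Sum>j<k. cnj (ell j m) * l2_inner u (ell j))"
    using inner_sum2[OF u, of "{..<k}" ell] ell_l2 by simp
  finally show ?thesis unfolding C_def using inner_basis2[OF ell_l2 m]
    by (simp add: mult.commute)
qed

lemma C_lin: assumes "u \<in> l2 J" "x \<in> l2 J" "y \<in> l2 J"
  shows "C k u (\<lambda>i. a * x i + y i) = a * C k u x + C k u y"
proof -
  have rx: "\<rho> x \<in> l2 J" "\<rho> y \<in> l2 J" using lin_opD(1)[OF L] assms by auto
  have "\<rho> (\<lambda>i. a * x i + y i) = (\<lambda>i. a * \<rho> x i + \<rho> y i)" using lin_opD(2)[OF L assms(2,3)] .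
  hence 1: "l2_inner u (\<rho> (\<lambda>i. a * x i + y i)) = a * l2_inner u (\<rho> x) + l2_inner u (\<rho> y)"
    using inner_lin2[OF assms(1) rx] by simp
  have 2: "l2_inner (ell j) (\<lambda>i. a * x i + y i) = a * l2_inner (ell j) x + l2_inner (ell j) y" for j
    using inner_lin2[OF ell_l2 assms(2,3)] .
  have 3: "(\<Sum>j<k. l2_inner u (ell j) * (a * l2_inner (ell j) x + l2_inner (ell j) y))
     = (\<Sum>j<k. a * (l2_inner u (ell j) * l2_inner (ell j) x) + l2_inner u (ell j) * l2_inner (ell j) y)"
    by (rule sum.cong) (simp_all add: algebra_simps)
  have 4: "(\<Sum>j<k. a * (l2_inner u (ell j) * l2_inner (ell j) x) + l2_inner u (ell j) * l2_inner (ell j) y)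
     = a * (\<Sum>j<k. l2_inner u (ell j) * l2_inner (ell j) x) + (\<Sum>j<k. l2_inner u (ell j) * l2_inner (ell j) y)"
    by (simp only: sum.distrib sum_distrib_left)
  show ?thesis unfolding C_def 1 2 3 4 by (simp only: algebra_simps)
qed

lemma C_herm: assumes "u \<in> l2 J" "v \<in> l2 J" shows "C k u v = cnj (C k v u)"
proof -
  have "l2_inner u (ell j) * l2_inner (ell j) v = cnj (l2_inner v (ell j) * l2_inner (ell j) u)" for j
    using inner_conj[OF assms(1) ell_l2] inner_conj[OF ell_l2 assms(2)] by simp
  hence "(\<Sum>j<k. l2_inner u (ell j) * l2_inner (ell j) v) = cnj (\<Sum>j<k. l2_inner v (ell j) * l2_inner (ell j) u)"
    by (simp only: cnj_sum)
  thus ?thesis unfolding C_def using rho_herm[OF dens assms] by (simp only: complex_cnj_diff)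
qed

lemma resid_sym: assumes "a \<in> J" "b \<in> J" shows "resid k a b = cnj (resid k b a)"
proof -
  have "resid k a b = l2_inner (basis_vec b) (resid k a)" by (simp add: inner_basis1)
  also have "\<dots> = C k (basis_vec b) (basis_vec a)" using C_basis basis_l2 assms by simp
  also have "\<dots> = cnj (C k (basis_vec a) (basis_vec b))" using C_herm[OF basis_l2 basis_l2] assms by blast
  also have "C k (basis_vec a) (basis_vec b) = resid k b a"
    using C_basis basis_l2 assms by (simp add: inner_basis1)
  finally show ?thesis .
qed

lemma C_Suc: "C (Suc k) u v = C k u v - l2_inner u (ell k) * l2_inner (ell k) v"
  unfolding C_def by simp

lemma resid_Suc: "resid (Suc k) m = (\<lambda>i. resid k m i - cnj (ell k m) * ell k i)"
  unfolding resid_def by (simp add: algebra_simps)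

lemma CS_C: assumes "\<forall>u\<in>l2 J. Re (C k u u) \<ge> 0" "u \<in> l2 J" "v \<in> l2 J"
  shows "(cmod (C k u v))^2 \<le> Re (C k u u) * Re (C k v v)"
  by (rule CS_form[where S="l2 J" and B="C k", OF C_lin C_herm _ l2_lin]) (use assms in auto)

lemma invariant: "(\<forall>u\<in>l2 J. Re (C k u u) \<ge> 0) \<and> (\<forall>m\<in>J. m < k \<longrightarrow> resid k m = (\<lambda>i. 0))"
proof (induction k)
  case 0
  show ?case unfolding C_def using rho_real(2)[OF dens] by simp
next
  case (Suc k)
  have pos: "\<forall>u\<in>l2 J. Re (C k u u) \<ge> 0" and res: "\<forall>m\<in>J. m < k \<longrightarrow> resid k m = (\<lambda>i. 0)"
    using Suc by auto
  define c where "c = Re (resid k k k)"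
  have Ckk: "k \<in> J \<Longrightarrow> C k (basis_vec k) (basis_vec k) = resid k k k"
    using C_basis[OF basis_l2] by (simp add: inner_basis1)
  show ?case
  proof (cases "k \<in> J \<and> c > 0")
    case False
    have e0: "ell k = (\<lambda>i. 0)" by (subst ell_eq) (use False in \<open>auto simp: c_def\<close>)
    have CS: "C (Suc k) = C k" unfolding C_Suc e0 by (simp add: inner_zero2 fun_eq_iff)
    have RS: "resid (Suc k) = resid k" unfolding resid_Suc e0 by (simp add: fun_eq_iff)
    have "resid k k = (\<lambda>i. 0)" if kJ: "k \<in> J"
    proof -
      have "c \<ge> 0" using pos basis_l2[OF kJ] Ckk[OF kJ] unfolding c_def by force
      hence c0: "c = 0" using False kJ by simp
      have Cz: "C k u (basis_vec k) = 0" if u: "u \<in> l2 J" for u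
        using CS_C[OF pos u basis_l2[OF kJ]] Ckk[OF kJ] c0 unfolding c_def by simp
      have "l2_inner (basis_vec i) (resid k k) = 0" if "i \<in> J" for i
      proof -
        have "C k (basis_vec i) (basis_vec k) = 0" using Cz basis_l2 that by blast
        thus ?thesis using C_basis[OF basis_l2[OF that] kJ, of k] by simp
      qed
      hence "resid k k i = 0" if "i \<in> J" for i using that by (simp add: inner_basis1)
      moreover have "resid k k i = 0" if "i \<notin> J" for i using l2_vanish[OF resid_l2[OF kJ] that] .
      ultimately show ?thesis by blast
    qed
    thus ?thesis using pos res unfolding CS RS by (auto simp: less_Suc_eq)
  next
    case True
    hence kJ: "k \<in> J" and cp: "c > 0" by auto
    define sc where "sc = complex_of_real (sqrt c)"
    have sc0: "sc \<noteq> 0" using cp by (simp add: sc_def)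
    have ek: "ell k = (\<lambda>i. resid k k i / sc)" using True by (subst ell_eq) (simp add: c_def sc_def)
    have rkk: "resid k k k = of_real c"
    proof -
      have "Im (resid k k k) = 0" using resid_sym[OF kJ kJ, of k] by (simp add: complex_eq_iff)
      thus ?thesis unfolding c_def by (simp add: complex_eq_iff)
    qed
    have ccs: "cnj sc * sc = of_real c" unfolding sc_def using cp
      by (simp add: of_real_mult[symmetric] del: of_real_mult)
    have inner_ell: "l2_inner u (ell k) = C k u (basis_vec k) / sc" if u: "u \<in> l2 J" for u
    proof -
      have "ell k = (\<lambda>i. (1 / sc) * resid k k i + 0)" unfolding ek by simp
      hence "l2_inner u (ell k) = (1/sc) * l2_inner u (resid k k)"
        using inner_lin2[OF u resid_l2[OF kJ] l2_zero, of "1/sc"] by (simp add: inner_zero2)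
      thus ?thesis using C_basis[OF u kJ] by simp
    qed
    have pos': "\<forall>u\<in>l2 J. Re (C (Suc k) u u) \<ge> 0"
    proof
      fix u assume u: "u \<in> l2 J"
      have a: "l2_inner u (ell k) * l2_inner (ell k) u = of_real ((cmod (l2_inner u (ell k)))^2)"
        using inner_conj[OF ell_l2 u, of k] complex_norm_square[of "l2_inner u (ell k)"] by simp
      have "(cmod (l2_inner u (ell k)))^2 = (cmod (C k u (basis_vec k)))^2 / c"
        unfolding inner_ell[OF u] using cp by (simp add: sc_def norm_divide power_divide)
      also have "\<dots> \<le> Re (C k u u) * c / c"
        using CS_C[OF pos u basis_l2[OF kJ]] Ckk[OF kJ] rkk cp by (intro divide_right_mono) auto
      also have "\<dots> = Re (C k u u)" using cp by simp
      finally show "Re (C (Suc k) u u) \<ge> 0" unfolding C_Suc using a by simp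
    qed
    have res': "resid (Suc k) m = (\<lambda>i. 0)" if m: "m \<in> J" "m < Suc k" for m
    proof (cases "m = k")
      case True
      have cs: "cnj sc = sc" by (simp add: sc_def)
      have ss: "sc * sc = of_real c" using ccs cs by simp
      have c0: "complex_of_real c \<noteq> 0" using cp by simp
      have "cnj (ell k k) * ell k i = (of_real c * resid k k i) / (sc * sc)" for i
        unfolding ek rkk using cs by simp
      hence "cnj (ell k k) * ell k i = resid k k i" for i
        unfolding ss using c0 by simp
      thus ?thesis unfolding resid_Suc True by simp
    next
      case False
      hence mk: "m < k" using m by simp
      have "ell k m = 0" unfolding ek using resid_sym[OF kJ m(1), of k] res mk m by simp
      thus ?thesis unfolding resid_Suc using res mk m by simp
    qed
    show ?thesis using pos' res' by blast
  qed
qed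

lemma rho_col: assumes m: "m \<in> J"
  shows "\<rho> (basis_vec m) = (\<lambda>i. \<Sum>j<Suc m. cnj (ell j m) * ell j i)"
proof -
  have "resid (Suc m) m = (\<lambda>i. 0)" using invariant m by blast
  thus ?thesis unfolding resid_def by (simp add: fun_eq_iff)
qed

lemma ell_above: assumes m: "m \<in> J" and mj: "m < j" shows "ell j m = 0"
proof (cases "j \<in> J \<and> Re (resid j j j) > 0")
  case True
  have "resid j m = (\<lambda>i. 0)" using invariant m mj by blast
  hence "resid j j m = 0" using resid_sym[OF True[THEN conjunct1] m, of j] by simp
  thus ?thesis by (subst ell_eq) simp
next
  case False thus ?thesis by (subst ell_eq) auto
qed

end

lemma sa_lin: "sa_idem J Q \<Longrightarrow> lin_op J Q" by (simp add: sa_idem_def)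

lemma sa_bound: assumes Q: "sa_idem J Q" and v: "v \<in> l2 J"
  shows "summable (\<lambda>m. cmod (cnj (v m) * Q v m))"
    and "(\<Sum>m. cmod (cnj (v m) * Q v m)) \<le> (\<Sum>m. (cmod (v m))^2)"
    and "l2_inner v (Q v) = of_real (\<Sum>m. (cmod (Q v m))^2)"
proof -
  have qv: "Q v \<in> l2 J" using lin_opD(1)[OF sa_lin[OF Q] v] .
  show s: "summable (\<lambda>m. cmod (cnj (v m) * Q v m))" by (rule prod_abs_summable[OF v qv])
  have "l2_inner (Q v) (Q v) = l2_inner v (Q (Q v))" using Q v qv by (simp add: sa_idem_def)
  also have "Q (Q v) = Q v" using Q v by (simp add: sa_idem_def)
  finally have e: "l2_inner v (Q v) = l2_inner (Q v) (Q v)" by simp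
  show e2: "l2_inner v (Q v) = of_real (\<Sum>m. (cmod (Q v m))^2)" using e inner_self[OF qv] by simp
  define A where "A = (\<Sum>m. (cmod (v m))^2)"
  define X where "X = (\<Sum>m. (cmod (Q v m))^2)"
  define S where "S = (\<Sum>m. cmod (cnj (v m) * Q v m))"
  have sA: "summable (\<lambda>m. (cmod (v m))^2)" using l2_summable[OF v] .
  have sX: "summable (\<lambda>m. (cmod (Q v m))^2)" using l2_summable[OF qv] .
  have "S \<le> (\<Sum>m. (cmod (v m))^2 / 2 + (cmod (Q v m))^2 / 2)"
    unfolding S_def
  proof (rule suminf_le[OF _ s])
    fix m
    have "0 \<le> (cmod (v m) - cmod (Q v m))^2" by simp
    thus "cmod (cnj (v m) * Q v m) \<le> (cmod (v m))^2 / 2 + (cmod (Q v m))^2 / 2"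
      by (simp add: norm_mult power2_eq_square algebra_simps)
  next
    show "summable (\<lambda>m. (cmod (v m))^2 / 2 + (cmod (Q v m))^2 / 2)"
      using sA sX by (intro summable_add summable_divide)
  qed
  also have "\<dots> = A / 2 + X / 2" unfolding A_def X_def
    using sA sX by (simp add: suminf_add[symmetric] suminf_divide summable_divide)
  finally have SA: "S \<le> A / 2 + X / 2" .
  have "X = cmod (l2_inner v (Q v))" using e2 X_def
    by (simp add: suminf_nonneg sX)
  also have "\<dots> \<le> S" unfolding l2_inner_def S_def using summable_norm[of "\<lambda>m. cnj (v m) * Q v m"] s
    by simp
  finally have "X \<le> S" .
  thus "(\<Sum>m. cmod (cnj (v m) * Q v m)) \<le> (\<Sum>m. (cmod (v m))^2)" using SA unfolding S_def A_def by simp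
qed

lemma fin_supp_has_sum: fixes f :: "nat \<Rightarrow> 'a::{comm_monoid_add, topological_space}"
  assumes "finite F" "\<And>j. j \<notin> F \<Longrightarrow> f j = 0"
  shows "(f has_sum (sum f F)) UNIV"
proof -
  have "(f has_sum (sum f F)) F" using assms(1) by simp
  thus ?thesis by (subst has_sum_cong_neutral[where T=F and g=f]) (use assms in auto)
qed

context dens begin

lemma ell_out: "i \<notin> J \<Longrightarrow> ell j i = 0" using l2_vanish[OF ell_l2] .

lemma rho_diag: assumes m: "m \<in> J"
  shows "\<rho> (basis_vec m) m = of_real (\<Sum>j<Suc m. (cmod (ell j m))^2)"
proof -
  have "\<rho> (basis_vec m) m = (\<Sum>j<Suc m. cnj (ell j m) * ell j m)" using rho_col[OF m] by simp
  also have "\<dots> = (\<Sum>j<Suc m. of_real ((cmod (ell j m))^2))"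
    by (rule sum.cong) (simp_all only: complex_norm_square mult.commute)
  finally show ?thesis by simp
qed

lemma diag_has_sum: "((\<lambda>m. if m \<in> J then Re (\<rho> (basis_vec m) m) else 0) has_sum 1) UNIV"
proof -
  have "((\<lambda>m. Re (\<rho> (basis_vec m) m)) has_sum 1) J" using dens by (simp add: density_op_def)
  thus ?thesis by (subst has_sum_cong_neutral[where T=J and g="\<lambda>m. Re (\<rho> (basis_vec m) m)"]) auto
qed

lemma inner_ell_sum: "((\<lambda>j. (cmod (ell j m))^2) has_sum (if m \<in> J then Re (\<rho> (basis_vec m) m) else 0)) UNIV"
proof (cases "m \<in> J")
  case True
  have "((\<lambda>j. (cmod (ell j m))^2) has_sum (\<Sum>j\<in>{..<Suc m}. (cmod (ell j m))^2)) UNIV"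
    by (rule fin_supp_has_sum) (use ell_above[OF True] in auto)
  thus ?thesis using rho_diag[OF True] True by simp
next
  case False
  thus ?thesis using ell_out[OF False] by simp
qed

lemma H_summable: "(\<lambda>(j, m). (cmod (ell j m))^2) summable_on UNIV \<times> UNIV"
proof -
  let ?f = "\<lambda>(m, j). (cmod (ell j m))^2"
  have "(\<lambda>x. norm (?f x)) summable_on UNIV \<times> UNIV"
  proof (rule Infinite_Sum.abs_summable_on_Sigma_iff[where f = ?f and A = UNIV and B = "\<lambda>_. UNIV", THEN iffD2], intro conjI ballI)
    fix m :: nat
    show "(\<lambda>j. norm (?f (m, j))) summable_on UNIV"
      using inner_ell_sum[of m] by (auto simp: summable_on_def)
  next
    have "infsum (\<lambda>j. norm (?f (m, j))) UNIV = (if m \<in> J then Re (\<rho> (basis_vec m) m) else 0)" for m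
      using inner_ell_sum[of m] by (simp add: infsumI)
    moreover have "(\<lambda>m. norm (if m \<in> J then Re (\<rho> (basis_vec m) m) else 0)) summable_on UNIV"
    proof -
      have "(if m \<in> J then Re (\<rho> (basis_vec m) m) else 0) \<ge> 0" for m
        using rho_real(2)[OF dens basis_l2, of m] by (auto simp: inner_basis1)
      thus ?thesis using diag_has_sum by (auto simp: summable_on_def)
    qed
    ultimately show "(\<lambda>m. norm (infsum (\<lambda>j. norm (?f (m, j))) UNIV)) summable_on UNIV" by simp
  qed
  hence "?f summable_on UNIV \<times> UNIV" by (rule abs_summable_summable)
  thus ?thesis by (subst summable_on_swap) simp
qed

definition nsq :: "nat \<Rightarrow> real" where "nsq j = (\<Sum>m. (cmod (ell j m))^2)"

lemma nsq_has_sum: "((\<lambda>m. (cmod (ell j m))^2) has_sum nsq j) UNIV"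
  unfolding nsq_def by (rule sums_nonneg_imp_has_sum) (use l2_summable[OF ell_l2] in \<open>auto simp: summable_sums\<close>)

lemma nsq_summable: "nsq summable_on UNIV"
proof -
  let ?f = "\<lambda>(j, m). (cmod (ell j m))^2"
  have e: "(\<lambda>x. norm (?f x)) = ?f" by (auto simp: fun_eq_iff)
  have "(\<lambda>x. norm (?f x)) summable_on UNIV \<times> UNIV"
    using H_summable unfolding e .
  hence "(\<lambda>j. norm (infsum (\<lambda>m. norm (?f (j, m))) UNIV)) summable_on UNIV"
    using Infinite_Sum.abs_summable_on_Sigma_iff[where f = ?f and A = UNIV and B = "\<lambda>_. UNIV"] by blast
  moreover have "infsum (\<lambda>m. norm (?f (j, m))) UNIV = nsq j" for j
    using nsq_has_sum[of j] by (simp add: infsumI)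
  moreover have "nsq j \<ge> 0" for j using nsq_has_sum[of j] has_sum_nonneg by (metis zero_le_power2)
  ultimately show ?thesis by simp
qed

lemma G_summable: assumes Q: "sa_idem J Q"
  shows "(\<lambda>(j, m). cnj (ell j m) * Q (ell j) m) summable_on UNIV \<times> UNIV"
proof -
  let ?g = "\<lambda>(j, m). cnj (ell j m) * Q (ell j) m"
  have "(\<lambda>x. norm (?g x)) summable_on UNIV \<times> UNIV"
  proof (rule Infinite_Sum.abs_summable_on_Sigma_iff[where f = ?g and A = UNIV and B = "\<lambda>_. UNIV", THEN iffD2], intro conjI ballI)
    fix j :: nat
    show "(\<lambda>m. norm (?g (j, m))) summable_on UNIV"
      using sa_bound(1)[OF Q ell_l2, of j] by (simp add: summable_on_UNIV_nonneg_real_iff)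
  next
    have b: "norm (infsum (\<lambda>m. norm (?g (j, m))) UNIV) \<le> nsq j" for j
    proof -
      have s: "summable (\<lambda>m. cmod (cnj (ell j m) * Q (ell j) m))" using sa_bound(1)[OF Q ell_l2, of j] .
      have "infsum (\<lambda>m. norm (?g (j, m))) UNIV = (\<Sum>m. cmod (cnj (ell j m) * Q (ell j) m))"
        using s by (intro infsumI sums_nonneg_imp_has_sum) (auto simp: summable_sums)
      moreover have "(\<Sum>m. cmod (cnj (ell j m) * Q (ell j) m)) \<ge> 0" using s by (intro suminf_nonneg) auto
      ultimately show ?thesis using sa_bound(2)[OF Q ell_l2, of j] unfolding nsq_def by simp
    qed
    show "(\<lambda>j. norm (infsum (\<lambda>m. norm (?g (j, m))) UNIV)) summable_on UNIV"
      by (rule summable_on_comparison_test[OF nsq_summable]) (use b in auto)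
  qed
  thus ?thesis by (rule abs_summable_summable)
qed

lemma trace_formula: assumes Q: "sa_idem J Q"
  shows "trace_op J (\<lambda>v. Q (\<rho> v)) = infsum (\<lambda>j. l2_inner (ell j) (Q (ell j))) UNIV"
proof -
  let ?g = "\<lambda>j m. cnj (ell j m) * Q (ell j) m"
  have col: "Q (\<rho> (basis_vec m)) m = infsum (\<lambda>j. ?g j m) UNIV" if m: "m \<in> J" for m
  proof -
    have "Q (\<rho> (basis_vec m)) = (\<lambda>i. \<Sum>j\<in>{..<Suc m}. cnj (ell j m) * Q (ell j) i)"
      unfolding rho_col[OF m] by (rule op_sum[OF sa_lin[OF Q]]) (rule ell_l2)
    hence "Q (\<rho> (basis_vec m)) m = (\<Sum>j\<in>{..<Suc m}. ?g j m)" by simp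
    also have "\<dots> = infsum (\<lambda>j. ?g j m) UNIV"
      by (rule infsumI[symmetric], rule fin_supp_has_sum) (use ell_above[OF m] in auto)
    finally show ?thesis .
  qed
  have out: "infsum (\<lambda>j. ?g j m) UNIV = 0" if "m \<notin> J" for m using ell_out[OF that] by simp
  have sw: "(\<lambda>(m, j). ?g j m) summable_on UNIV \<times> UNIV"
    using G_summable[OF Q] by (subst (asm) summable_on_swap) (simp add: case_prod_unfold)
  have inn: "infsum (\<lambda>m. ?g j m) UNIV = l2_inner (ell j) (Q (ell j))" for j
  proof -
    have qv: "Q (ell j) \<in> l2 J" using lin_opD(1)[OF sa_lin[OF Q] ell_l2] .
    show ?thesis unfolding l2_inner_def
      by (rule infsumI, rule norm_summable_imp_has_sum)
        (use sa_bound(1)[OF Q ell_l2, of j] prod_summable[OF ell_l2 qv] in \<open>auto simp: summable_sums\<close>)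
  qed
  have "trace_op J (\<lambda>v. Q (\<rho> v)) = infsum (\<lambda>m. Q (\<rho> (basis_vec m)) m) J" unfolding trace_op_def ..
  also have "\<dots> = infsum (\<lambda>m. infsum (\<lambda>j. ?g j m) UNIV) UNIV"
    by (rule infsum_cong_neutral) (use col out in auto)
  also have "\<dots> = infsum (\<lambda>j. infsum (\<lambda>m. ?g j m) UNIV) UNIV"
    by (rule infsum_swap_banach[OF sw])
  also have "\<dots> = infsum (\<lambda>j. l2_inner (ell j) (Q (ell j))) UNIV" unfolding inn ..
  finally show ?thesis .
qed

lemma trace_pos: assumes Q: "sa_idem J Q" and nz: "Q (ell j0) \<noteq> (\<lambda>i. 0)"
  shows "Re (trace_op J (\<lambda>v. Q (\<rho> v))) > 0"
proof -
  define X where "X j = (\<Sum>m. (cmod (Q (ell j) m))^2)" for j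
  have qv: "Q (ell j) \<in> l2 J" for j using lin_opD(1)[OF sa_lin[OF Q] ell_l2] .
  have T: "l2_inner (ell j) (Q (ell j)) = of_real (X j)" for j
    using sa_bound(3)[OF Q ell_l2] unfolding X_def by simp
  have Xnn: "X j \<ge> 0" for j unfolding X_def using l2_summable[OF qv] by (intro suminf_nonneg) auto
  have XA: "X j \<le> nsq j" for j
  proof -
    have "X j = norm (l2_inner (ell j) (Q (ell j)))" using T Xnn by simp
    also have "\<dots> \<le> (\<Sum>m. cmod (cnj (ell j m) * Q (ell j) m))"
      unfolding l2_inner_def using summable_norm[OF sa_bound(1)[OF Q ell_l2, of j]] by simp
    also have "\<dots> \<le> nsq j" using sa_bound(2)[OF Q ell_l2, of j] unfolding nsq_def .
    finally show ?thesis .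
  qed
  have sX: "X summable_on UNIV"
    by (rule summable_on_comparison_test[OF nsq_summable]) (use XA Xnn in auto)
  have "((\<lambda>j. complex_of_real (X j)) has_sum of_real (infsum X UNIV)) UNIV"
    using has_sum_of_real_iff has_sum_infsum[OF sX] by blast
  hence "infsum (\<lambda>j. l2_inner (ell j) (Q (ell j))) UNIV = of_real (infsum X UNIV)"
    unfolding T by (rule infsumI)
  hence tr: "Re (trace_op J (\<lambda>v. Q (\<rho> v))) = infsum X UNIV" using trace_formula[OF Q] by simp
  obtain i where i: "Q (ell j0) i \<noteq> 0" using nz by auto
  have "X j0 > 0" unfolding X_def
    by (rule suminf_pos2[of _ i]) (use l2_summable[OF qv] i in auto)
  also have "X j0 = sum X {j0}" by simp
  also have "\<dots> \<le> infsum X UNIV" by (rule finite_sum_le_infsum[OF sX]) (use Xnn in auto)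
  finally show ?thesis using tr by simp
qed

end

primrec rch :: "(nat \<Rightarrow> nat \<Rightarrow> nat \<Rightarrow> bool) \<Rightarrow> nat \<Rightarrow> nat \<Rightarrow> nat \<Rightarrow> nat \<Rightarrow> bool" where
  "rch S i b 0 d = (d = b)"
| "rch S i b (Suc k) d = (\<exists>a. rch S i b k a \<and> S (i + k) a d)"

lemma rch_comp: "rch S 0 c i b \<Longrightarrow> rch S i b k d \<Longrightarrow> rch S 0 c (i + k) d"
proof (induction k arbitrary: d)
  case 0 thus ?case by simp
next
  case (Suc k)
  then obtain a where "rch S i b k a" "S (i + k) a d" by auto
  thus ?case using Suc by auto
qed

lemma rch_path: "rch S 0 c i b \<Longrightarrow> \<exists>t. t 0 = c \<and> t i = b \<and> (\<forall>j<i. S j (t j) (t (Suc j)))"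
proof (induction i arbitrary: b)
  case 0 thus ?case by (intro exI[of _ "\<lambda>_. c"]) simp
next
  case (Suc i)
  then obtain a where a: "rch S 0 c i a" "S i a b" by auto
  then obtain t where t: "t 0 = c" "t i = a" "\<forall>j<i. S j (t j) (t (Suc j))" using Suc by blast
  show ?case
  proof (intro exI[of _ "t(Suc i := b)"] conjI allI impI)
    fix j assume "j < Suc i"
    thus "S j ((t(Suc i := b)) j) ((t(Suc i := b)) (Suc j))"
      using t a by (cases "j = i") auto
  qed (use t in auto)
qed

locale cyc =
  fixes n :: nat and J :: "nat set" and P :: "nat \<Rightarrow> nat \<Rightarrow> op" and \<psi> :: vec
  assumes npos: "n \<ge> 1"
    and proj: "\<forall>i<n. \<forall>a\<in>{0,1}. sa_idem J (P i a)"
    and psum: "\<forall>i<n. \<forall>x\<in>l2 J. (\<lambda>k. P i 0 x k + P i 1 x k) = x"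
    and comm: "\<forall>i<n. \<forall>a\<in>{0,1}. \<forall>b\<in>{0,1}. \<forall>x\<in>l2 J.
           P i a (P ((i + 1) mod n) b x) = P ((i + 1) mod n) b (P i a x)"
    and psi: "\<psi> \<in> l2 J" and psinz: "\<psi> \<noteq> (\<lambda>k. 0)"
begin

definition S :: "nat \<Rightarrow> nat \<Rightarrow> nat \<Rightarrow> bool" where
  "S i a b \<longleftrightarrow> a \<in> {0,1} \<and> b \<in> {0,1} \<and> P i a (P (Suc i mod n) b \<psi>) \<noteq> (\<lambda>k. 0)"

lemma nx: "i < n \<Longrightarrow> Suc i mod n < n" using npos by simp

lemma saP: "i < n \<Longrightarrow> a \<in> {0,1} \<Longrightarrow> sa_idem J (P i a)"
  using proj by blast

lemma linP: "i < n \<Longrightarrow> a \<in> {0,1} \<Longrightarrow> lin_op J (P i a)"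
  using saP unfolding sa_idem_def by blast

lemma Pl2: "i < n \<Longrightarrow> a \<in> {0,1} \<Longrightarrow> x \<in> l2 J \<Longrightarrow> P i a x \<in> l2 J"
  using lin_opD(1)[OF linP] by blast

lemma Pzero: "i < n \<Longrightarrow> a \<in> {0,1} \<Longrightarrow> P i a (\<lambda>k. 0) = (\<lambda>k. 0)"
  using op_zero[OF linP] by blast

lemma Padd: "i < n \<Longrightarrow> a \<in> {0,1} \<Longrightarrow> x \<in> l2 J \<Longrightarrow> y \<in> l2 J \<Longrightarrow>
   P i a (\<lambda>k. x k + y k) = (\<lambda>k. P i a x k + P i a y k)"
  using lin_opD(2)[OF linP, of i a x y 1] by simp

lemma Pidem: "i < n \<Longrightarrow> a \<in> {0,1} \<Longrightarrow> x \<in> l2 J \<Longrightarrow> P i a (P i a x) = P i a x"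
  using saP unfolding sa_idem_def by blast

lemma psum2: "i < n \<Longrightarrow> a \<in> {0,1} \<Longrightarrow> a' \<in> {0,1} \<Longrightarrow> a' \<noteq> a \<Longrightarrow> x \<in> l2 J \<Longrightarrow>
   (\<lambda>k. P i a x k + P i a' x k) = x"
  using psum by (auto simp: add.commute)

lemma F1: assumes i: "i < n" and a: "a \<in> {0,1}" and nz: "P i a \<psi> \<noteq> (\<lambda>k. 0)"
  shows "\<exists>b\<in>{0,1}. S i a b"
proof (rule ccontr)
  assume "\<not> ?thesis"
  hence z: "P i a (P (Suc i mod n) b \<psi>) = (\<lambda>k. 0)" if "b \<in> {0,1}" for b
    using that a unfolding S_def by blast
  have "P i a \<psi> = P i a (\<lambda>k. P (Suc i mod n) 0 \<psi> k + P (Suc i mod n) 1 \<psi> k)"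
    using psum nx[OF i] psi by simp
  also have "\<dots> = (\<lambda>k. P i a (P (Suc i mod n) 0 \<psi>) k + P i a (P (Suc i mod n) 1 \<psi>) k)"
    by (rule Padd[OF i a]) (use Pl2 nx[OF i] psi in auto)
  also have "\<dots> = (\<lambda>k. 0)" using z by simp
  finally show False using nz by simp
qed

lemma F2: assumes i: "i < n" and s: "S i a b" shows "P (Suc i mod n) b \<psi> \<noteq> (\<lambda>k. 0)"
  using s Pzero[OF i] unfolding S_def by auto

lemma Sval: "S i a b \<Longrightarrow> a \<in> {0,1} \<and> b \<in> {0,1}" unfolding S_def by auto

lemma F3: assumes i: "i < n" and ab: "a \<in> {0,1}" "a' \<in> {0,1}" "a' \<noteq> a" "b \<in> {0,1}" "b' \<in> {0,1}" "b' \<noteq> b"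
  and n1: "\<not> S i a b'" and n2: "\<not> S i a' b"
  shows "P i a \<psi> = P (Suc i mod n) b \<psi>"
proof -
  let ?j = "Suc i mod n"
  have j: "?j < n" using nx[OF i] .
  have z1: "P i a (P ?j b' \<psi>) = (\<lambda>k. 0)" using n1 ab unfolding S_def by blast
  have z2: "P i a' (P ?j b \<psi>) = (\<lambda>k. 0)" using n2 ab unfolding S_def by blast
  have "P i a \<psi> = P i a (\<lambda>k. P ?j b \<psi> k + P ?j b' \<psi> k)"
    using psum2[OF j ab(4,5,6) psi] by simp
  also have "\<dots> = (\<lambda>k. P i a (P ?j b \<psi>) k + P i a (P ?j b' \<psi>) k)"
    by (rule Padd[OF i ab(1)]) (use Pl2 j psi ab in auto)
  also have "\<dots> = P i a (P ?j b \<psi>)" using z1 by simp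
  finally have e1: "P i a \<psi> = P i a (P ?j b \<psi>)" .
  have "P ?j b \<psi> = (\<lambda>k. P i a (P ?j b \<psi>) k + P i a' (P ?j b \<psi>) k)"
    using psum2[OF i ab(1,2,3) Pl2[OF j ab(4) psi]] by simp
  also have "\<dots> = P i a (P ?j b \<psi>)" using z2 by simp
  finally show ?thesis using e1 by simp
qed

lemma F4: assumes i: "i < n" and e: "P i 0 \<psi> = P i 1 \<psi>" shows "P i 0 \<psi> = (\<lambda>k. 0)"
proof -
  have p0: "P i 0 \<psi> \<in> l2 J" using Pl2[OF i _ psi] by simp
  have p1: "P i 1 \<psi> = (\<lambda>k. (-1) * P i 0 \<psi> k + \<psi> k)"
  proof -
    have "(\<lambda>k. P i 0 \<psi> k + P i 1 \<psi> k) = \<psi>" using psum i psi by blast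
    hence "\<And>k. P i 0 \<psi> k + P i 1 \<psi> k = \<psi> k" by metis
    thus ?thesis by (auto simp: fun_eq_iff algebra_simps)
  qed
  have "P i 0 \<psi> = P i 0 (P i 0 \<psi>)" using Pidem[OF i _ psi] by simp
  also have "\<dots> = P i 0 (P i 1 \<psi>)" using e by simp
  also have "\<dots> = (\<lambda>k. (-1) * P i 0 (P i 0 \<psi>) k + P i 0 \<psi> k)"
    unfolding p1 by (rule lin_opD(2)[OF linP[OF i] p0 psi]) simp
  also have "\<dots> = (\<lambda>k. 0)" using Pidem[OF i _ psi] by simp
  finally show ?thesis .
qed

lemma rch_val: "rch S i b k d \<Longrightarrow> b \<in> {0,1} \<Longrightarrow> d \<in> {0,1}"
  by (cases k) (auto dest: Sval)

lemma rch_nz: "rch S i b k d \<Longrightarrow> i + k \<le> n \<Longrightarrow> P (i mod n) b \<psi> \<noteq> (\<lambda>k. 0) \<Longrightarrow> P ((i + k) mod n) d \<psi> \<noteq> (\<lambda>k. 0)"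
proof (cases k)
  case 0 thus "rch S i b k d \<Longrightarrow> i + k \<le> n \<Longrightarrow> P (i mod n) b \<psi> \<noteq> (\<lambda>k. 0) \<Longrightarrow> ?thesis" by simp
next
  case (Suc k')
  assume r: "rch S i b k d" and le: "i + k \<le> n"
  then obtain a where "S (i + k') a d" using Suc by auto
  thus ?thesis using F2[of "i + k'" a d] le Suc by simp
qed

lemma tot: assumes b: "b \<in> {0,1}" and nz: "P (i mod n) b \<psi> \<noteq> (\<lambda>k. 0)"
  shows "i + k \<le> n \<Longrightarrow> \<exists>d. rch S i b k d"
proof (induction k)
  case 0 thus ?case by simp
next
  case (Suc k)
  then obtain a where a: "rch S i b k a" by auto
  have av: "a \<in> {0,1}" using rch_val[OF a b] .
  have ik: "i + k < n" using Suc by simp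
  have "P ((i + k) mod n) a \<psi> \<noteq> (\<lambda>k. 0)" using rch_nz[OF a] Suc nz by simp
  hence "P (i + k) a \<psi> \<noteq> (\<lambda>k. 0)" using ik by simp
  then obtain d where "S (i + k) a d" using F1[OF ik av] by blast
  thus ?case using a by auto
qed

lemma main_pure: "\<exists>t. (\<forall>i<n. t i \<in> {0,1}) \<and>
   (\<forall>i<n. P i (t i) (P ((i + 1) mod n) (t ((i + 1) mod n)) \<psi>) \<noteq> (\<lambda>k. 0))"
proof (rule ccontr)
  assume NG: "\<not> ?thesis"
  have noloop: "\<not> rch S 0 c n c" for c
  proof
    assume "rch S 0 c n c"
    then obtain t where t: "t 0 = c" "t n = c" "\<forall>j<n. S j (t j) (t (Suc j))"
      using rch_path by blast
    have "(\<forall>i<n. t i \<in> {0,1}) \<and>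
        (\<forall>i<n. P i (t i) (P ((i + 1) mod n) (t ((i + 1) mod n)) \<psi>) \<noteq> (\<lambda>k. 0))"
    proof (intro conjI allI impI)
      fix i assume i: "i < n"
      show "t i \<in> {0,1}" using Sval t(3) i by blast
      have "t ((i + 1) mod n) = t (Suc i)"
        using t(1,2) i by (cases "Suc i = n") auto
      thus "P i (t i) (P ((i + 1) mod n) (t ((i + 1) mod n)) \<psi>) \<noteq> (\<lambda>k. 0)"
        using t(3) i unfolding S_def by simp
    qed
    thus False using NG by blast
  qed
  have n0: "0 < n" using npos by simp
  have V0: "P 0 0 \<psi> \<noteq> (\<lambda>k. 0) \<or> P 0 1 \<psi> \<noteq> (\<lambda>k. 0)"
  proof (rule ccontr)
    assume "\<not> ?thesis"
    hence "(\<lambda>k. P 0 0 \<psi> k + P 0 1 \<psi> k) = (\<lambda>k. 0)" by simp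
    moreover have "(\<lambda>k. P 0 0 \<psi> k + P 0 1 \<psi> k) = \<psi>" using psum n0 psi by blast
    ultimately show False using psinz by simp
  qed
  have other: "P 0 (1 - c) \<psi> \<noteq> (\<lambda>k. 0) \<and> rch S 0 c n (1 - c)" if c: "c \<in> {0,1}" "P 0 c \<psi> \<noteq> (\<lambda>k. 0)" for c
  proof -
    have "P (0 mod n) c \<psi> \<noteq> (\<lambda>k. 0)" using c(2) by simp
    then obtain d where d: "rch S 0 c n d" using tot[OF c(1), of 0 n] by auto
    have dv: "d \<in> {0,1}" using rch_val[OF d c(1)] .
    have "d \<noteq> c" using d noloop by blast
    hence d1: "d = 1 - c" using dv c(1) by auto
    have "P ((0 + n) mod n) d \<psi> \<noteq> (\<lambda>k. 0)" using rch_nz[OF d] c(2) by simp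
    hence "P 0 d \<psi> \<noteq> (\<lambda>k. 0)" by simp
    thus ?thesis using d d1 by simp
  qed
  have V00: "P 0 0 \<psi> \<noteq> (\<lambda>k. 0)" and V01: "P 0 1 \<psi> \<noteq> (\<lambda>k. 0)"
  proof -
    have "P 0 0 \<psi> \<noteq> (\<lambda>k. 0) \<and> P 0 1 \<psi> \<noteq> (\<lambda>k. 0)"
    proof (cases "P 0 0 \<psi> = (\<lambda>k. 0)")
      case True
      hence "P 0 1 \<psi> \<noteq> (\<lambda>k. 0)" using V0 by blast
      hence "P 0 (1 - 1) \<psi> \<noteq> (\<lambda>k. 0)" using other[of 1] by blast
      thus ?thesis using True by simp
    next
      case False
      hence "P 0 (1 - 0) \<psi> \<noteq> (\<lambda>k. 0)" using other[of 0] by blast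
      thus ?thesis using False by simp
    qed
    thus "P 0 0 \<psi> \<noteq> (\<lambda>k. 0)" "P 0 1 \<psi> \<noteq> (\<lambda>k. 0)" by auto
  qed
  have tot0: "\<exists>d. rch S 0 c i d" if "c \<in> {0,1}" "i \<le> n" for c i
  proof -
    have "P (0 mod n) c \<psi> \<noteq> (\<lambda>k. 0)" using that(1) V00 V01 by auto
    thus ?thesis using tot[OF that(1), of 0 i] that(2) by simp
  qed
  have disj: "\<not> (rch S 0 0 i b \<and> rch S 0 1 i b)" if i: "i \<le> n" for i b
  proof
    assume r: "rch S 0 0 i b \<and> rch S 0 1 i b"
    have r0: "rch S 0 0 i b" and r1: "rch S 0 1 i b" using r by auto
    have bv: "b \<in> {0,1}" using rch_val[OF r0] by simp
    have "P ((0 + i) mod n) b \<psi> \<noteq> (\<lambda>k. 0)" using rch_nz[OF r0] i V00 by simp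
    hence bnz: "P (i mod n) b \<psi> \<noteq> (\<lambda>k. 0)" by simp
    obtain d where d: "rch S i b (n - i) d" using tot[OF bv bnz, of "n - i"] i by auto
    have "rch S 0 0 (i + (n - i)) d" by (rule rch_comp[OF r0 d])
    hence d0: "rch S 0 0 n d" using i by simp
    have "rch S 0 1 (i + (n - i)) d" by (rule rch_comp[OF r1 d])
    hence d1: "rch S 0 1 n d" using i by simp
    have dv: "d \<in> {0,1}" using rch_val[OF d bv] .
    show False using noloop[of 0] noloop[of 1] dv d0 d1 by auto
  qed
  have uniq: "a = a'" if h: "i \<le> n" "rch S 0 0 i a" "rch S 0 0 i a'" for i a a'
  proof -
    obtain e where e: "rch S 0 1 i e" using tot0[of 1 i] h(1) by auto
    have "e \<in> {0,1}" "a \<in> {0,1}" "a' \<in> {0,1}"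
      using rch_val[OF e] rch_val[OF h(2)] rch_val[OF h(3)] by auto
    moreover have "e \<noteq> a" "e \<noteq> a'" using disj[OF h(1)] h(2,3) e by blast+
    ultimately show ?thesis by auto
  qed
  have cross: "rch S 0 1 i (1 - a)" if h: "i \<le> n" "rch S 0 0 i a" for i a
  proof -
    obtain e where e: "rch S 0 1 i e" using tot0[of 1 i] h(1) by auto
    have "e \<in> {0,1}" "a \<in> {0,1}" using rch_val[OF e] rch_val[OF h(2)] by auto
    moreover have "e \<noteq> a" using disj[OF h(1)] h(2) e by blast
    ultimately have "e = 1 - a" by auto
    thus ?thesis using e by simp
  qed
  have chain: "i \<le> n \<Longrightarrow> rch S 0 0 i b \<Longrightarrow> P (i mod n) b \<psi> = P 0 0 \<psi>" for i b
  proof (induction i arbitrary: b)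
    case 0 thus ?case by simp
  next
    case (Suc i)
    obtain a where a: "rch S 0 0 i a" "S i a b" using Suc.prems(2) by auto
    have i: "i < n" using Suc.prems(1) by simp
    have ile: "i \<le> n" using i by simp
    have av: "a \<in> {0,1}" and bv: "b \<in> {0,1}" using Sval[OF a(2)] by auto
    have "P (i mod n) a \<psi> = P 0 0 \<psi>" using Suc.IH[OF ile a(1)] .
    hence IH: "P i a \<psi> = P 0 0 \<psi>" using i by simp
    have n1: "\<not> S i a (1 - b)"
    proof
      assume "S i a (1 - b)"
      hence "rch S 0 0 (Suc i) (1 - b)" using a(1) by auto
      hence "1 - b = b" using uniq[OF Suc.prems(1) _ Suc.prems(2)] by blast
      thus False using bv by auto
    qed
    have n2: "\<not> S i (1 - a) b"
    proof
      assume sa: "S i (1 - a) b"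
      have "rch S 0 1 i (1 - a)" using cross[OF ile a(1)] .
      hence "rch S 0 1 (Suc i) b" using sa by auto
      thus False using disj[OF Suc.prems(1), of b] Suc.prems(2) by blast
    qed
    have "P i a \<psi> = P (Suc i mod n) b \<psi>"
      by (rule F3[OF i av _ _ bv _ _ n1 n2]) (use av bv in auto)
    thus ?case using IH by simp
  qed
  have "rch S 0 0 n 1" using other[of 0, OF _ V00] by simp
  hence "P (n mod n) 1 \<psi> = P 0 0 \<psi>" using chain[of n 1] by simp
  hence "P 0 0 \<psi> = P 0 1 \<psi>" by simp
  hence "P 0 0 \<psi> = (\<lambda>k. 0)" using F4[OF n0] by simp
  thus False using V00 by simp
qed
end

theorem corollary3:
  fixes n :: nat and p :: behavior
  assumes "n \<ge> 3" and "quantum_behavior n p"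
  shows "\<not> strongly_contextual n p"
proof -
  obtain J \<rho> P where d: "density_op J \<rho>"
    and pr: "\<forall>i<n. \<forall>a\<in>{0,1}. projector J (P i a)"
    and sm: "\<forall>i<n. \<forall>x\<in>l2 J. (\<lambda>k. P i 0 x k + P i 1 x k) = x"
    and cm: "\<forall>i<n. \<forall>a\<in>{0,1}. \<forall>b\<in>{0,1}. \<forall>x\<in>l2 J.
           P i a (P ((i + 1) mod n) b x) = P ((i + 1) mod n) b (P i a x)"
    and tr: "\<forall>i<n. \<forall>x\<in>{0,1}. \<forall>y\<in>{0,1}.
           complex_of_real (p i x y) = trace_op J (\<lambda>v. P i x (P ((i + 1) mod n) y (\<rho> v)))"
    using assms(2) unfolding quantum_behavior_def by blast
  interpret dens J \<rho> using d by (unfold_locales)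
  have "\<exists>j. ell j \<noteq> (\<lambda>k. 0)"
  proof (rule ccontr)
    assume "\<not> (\<exists>j. ell j \<noteq> (\<lambda>k. 0))"
    hence z: "ell j = (\<lambda>k. 0)" for j by blast
    have h1: "((\<lambda>m. Re (\<rho> (basis_vec m) m)) has_sum 1) J" using d by (simp add: density_op_def)
    have "Re (\<rho> (basis_vec m) m) = 0" if "m \<in> J" for m
      using rho_col[OF that] z by simp
    hence h0: "((\<lambda>m. Re (\<rho> (basis_vec m) m)) has_sum 0) J" by (rule has_sum_0)
    have "(1::real) = 0" using has_sum_unique[OF h1 h0] .
    thus False by simp
  qed
  then obtain j0 where j0: "ell j0 \<noteq> (\<lambda>k. 0)" by blast
  have proj': "\<forall>i<n. \<forall>a\<in>{0,1}. sa_idem J (P i a)" using pr proj_sa by blast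
  interpret cyc n J P "ell j0"
  proof (unfold_locales)
    show "1 \<le> n" using assms(1) by simp
  qed (use proj' sm cm ell_l2 j0 in blast)+
  obtain t where t01: "\<forall>i<n. t i \<in> {0,1}"
    and tnz: "\<forall>i<n. P i (t i) (P ((i + 1) mod n) (t ((i + 1) mod n)) (ell j0)) \<noteq> (\<lambda>k. 0)"
    using main_pure by blast
  have "p i (t i) (t ((i + 1) mod n)) > 0" if i: "i < n" for i
  proof -
    let ?j = "(i + 1) mod n"
    have j: "?j < n" using i by simp
    have a: "t i \<in> {0,1}" and b: "t ?j \<in> {0,1}" using t01 i j by auto
    have sA: "sa_idem J (P i (t i))" using proj' i a by blast
    have sB: "sa_idem J (P ?j (t ?j))" using proj' j b by blast
    have c: "\<And>x. x \<in> l2 J \<Longrightarrow> P i (t i) (P ?j (t ?j) x) = P ?j (t ?j) (P i (t i) x)"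
      using cm i a b by blast
    have sq: "sa_idem J (\<lambda>w. P i (t i) (P ?j (t ?j) w))" by (rule sa_comp[OF sA sB c])
    have nz: "(\<lambda>w. P i (t i) (P ?j (t ?j) w)) (ell j0) \<noteq> (\<lambda>k. 0)" using tnz i by blast
    have "Re (trace_op J (\<lambda>v. P i (t i) (P ?j (t ?j) (\<rho> v)))) > 0"
      using trace_pos[OF sq nz] .
    moreover have "complex_of_real (p i (t i) (t ?j)) = trace_op J (\<lambda>v. P i (t i) (P ?j (t ?j) (\<rho> v)))"
      using tr i a b by blast
    ultimately have "Re (complex_of_real (p i (t i) (t ?j))) > 0" by simp
    thus ?thesis by simp
  qed
  thus ?thesis unfolding strongly_contextual_def using t01 by blast
qed


end
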